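(* Let $\zeta$ be the Riemann zeta function and let $\rho$ be a complex number with $0 < \Re(\rho) < 1$ and $\zeta(\rho) = 0$ (a non-trivial zero). Then $$2^{\rho} + \frac{1}{\rho - 1} + \frac{1}{2} = \rho \int_{1}^{\infty} \left\{ t + \tfrac{1}{2} \right\} t^{-\rho-1}\, dt.$$
   Context: For a real number $x$, $\{x\} = x - \lfloor x \rfloor$ denotes the fractional part of $x$. The function $\zeta$ is the analytic continuation of $\sum_{n\ge 1} n^{-s}$ to the half-plane $\Re(s)>0$ (minus $s=1$). *)

theory Defs
  imports "HOL-Complex_Analysis.Complex_Analysis"
begin

definition zeta_domain :: "complex set" where
  "zeta_domain = {s. 0 < Re s} - {1}"

text \<open>Outside the domain it is set to 0 by convention.\<close>
definition zeta :: "complex \<Rightarrow> complex" where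
  "zeta = (THE f. f holomorphic_on zeta_domain
              \<and> (\<forall>s. 1 < Re s \<longrightarrow> f s = (\<Sum>n. inverse (of_nat (Suc n) powr s)))
              \<and> (\<forall>s. s \<notin> zeta_domain \<longrightarrow> f s = 0))"

end

theory Submission
  imports Defs
begin

lemma ftc_piece:
  fixes s :: complex and a c b :: real
  assumes s0: "s \<noteq> 0" and s1: "s \<noteq> 1" and c: "0 < c" "c \<le> b"
  defines "F \<equiv> \<lambda>t::real. of_real t * of_real t powr (-s) / (1 - s) + (of_real a / s) * of_real t powr (-s)"
  shows "((\<lambda>t. (of_real t - of_real a) * of_real t powr (-s-1)) has_integral (F b - F c)) {c..b}"
proof (rule fundamental_theorem_of_calculus[OF c(2)])
  fix x assume x: "x \<in> {c..b}"
  then have xpos: "x > 0" using c by auto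
  have nr: "complex_of_real x \<notin> \<real>\<^sub>\<le>\<^sub>0" using xpos by (auto simp: nonpos_Reals_def)
  have e: "complex_of_real x powr (-s) = of_real x * of_real x powr (-s-1)"
  proof -
    have "complex_of_real x powr (-s) = of_real x powr ((-s-1) + 1)" by simp
    also have "\<dots> = of_real x powr (-s-1) * of_real x" by (subst powr_add) simp
    finally show ?thesis by simp
  qed
  have d: "((\<lambda>z. z * z powr (-s) / (1 - s) + (of_real a / s) * z powr (-s)) has_field_derivative
      ((1 * of_real x powr (-s) + of_real x * ((-s) * of_real x powr (-s-1))) / (1-s) + (of_real a / s) * ((-s) * of_real x powr (-s-1)))) (at (of_real x))"
    using xpos s1 by (intro derivative_eq_intros has_field_derivative_powr[OF nr]) auto
  have "((1 * of_real x powr (-s) + of_real x * ((-s) * of_real x powr (-s-1))) / (1-s) + (of_real a / s) * ((-s) * of_real x powr (-s-1)))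
     = (of_real x - of_real a) * complex_of_real x powr (-s-1)"
    using s0 s1 unfolding e by (simp add: field_simps)
  with d have "((\<lambda>z. z * z powr (-s) / (1 - s) + (of_real a / s) * z powr (-s)) has_field_derivative
      ((of_real x - of_real a) * complex_of_real x powr (-s-1))) (at (of_real x))" by simp
  from has_vector_derivative_real_field[OF this]
  show "(F has_vector_derivative (of_real x - of_real a) * complex_of_real x powr (-s-1)) (at x within {c..b})"
    unfolding F_def by simp
qed

definition cc :: "nat \<Rightarrow> real" where "cc k = (if k = 0 then 1 else real k + 1/2)"
definition phi :: "complex \<Rightarrow> real \<Rightarrow> complex" where
  "phi s t = of_real (frac (t + 1/2)) * of_real t powr (-s-1)"
definition Fp :: "complex \<Rightarrow> real \<Rightarrow> real \<Rightarrow> complex" where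
  "Fp s a t = of_real t * of_real t powr (-s) / (1 - s) + (of_real a / s) * of_real t powr (-s)"
definition Hk :: "nat \<Rightarrow> complex \<Rightarrow> complex" where
  "Hk k s = Fp s (real k + 1/2) (cc (Suc k)) - Fp s (real k + 1/2) (cc k)"

lemma cc_pos: "cc k > 0" by (simp add: cc_def)
lemma cc_ge: "cc k \<ge> real k + 1/2" by (simp add: cc_def)
lemma cc_ge1: "cc k \<ge> 1" by (simp add: cc_def)
lemma cc_Suc: "cc (Suc k) = real k + 3/2" by (simp add: cc_def)
lemma cc_mono: "cc k \<le> cc (Suc k)" by (simp add: cc_def)
lemma cc_le: "cc k \<le> real k + 1" by (simp add: cc_def)

lemma frac_piece:
  assumes "real k + 1/2 \<le> t" "t < real k + 3/2"
  shows "frac (t + 1/2) = t - (real k + 1/2)"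
proof -
  have "floor (t + 1/2) = int k + 1" using assms by (subst floor_eq_iff) auto
  thus ?thesis by (simp add: frac_def)
qed

lemma piece_integral:
  assumes s0: "s \<noteq> 0" and s1: "s \<noteq> 1"
  shows "(phi s has_integral Hk k s) {cc k..cc (Suc k)}"
proof -
  have "((\<lambda>t. (of_real t - of_real (real k + 1/2)) * of_real t powr (-s-1)) has_integral Hk k s) {cc k..cc (Suc k)}"
    using ftc_piece[OF s0 s1 cc_pos cc_mono, of "real k + 1/2"] unfolding Hk_def Fp_def by simp
  then show ?thesis
  proof (rule has_integral_spike_finite[where S = "{cc (Suc k)}", rotated 2])
    fix t assume t: "t \<in> {cc k..cc (Suc k)} - {cc (Suc k)}"
    then have "real k + 1/2 \<le> t" "t < real k + 3/2" using cc_ge[of k] cc_Suc[of k] by auto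
    then show "phi s t = (of_real t - of_real (real k + 1/2)) * of_real t powr (-s-1)"
      unfolding phi_def by (subst frac_piece) auto
  qed auto
qed

lemma partial_integral:
  assumes s0: "s \<noteq> 0" and s1: "s \<noteq> 1"
  shows "(phi s has_integral (\<Sum>k<N. Hk k s)) {1..cc N}"
proof (induction N)
  case 0
  have "(phi s has_integral 0) {1}" by (rule has_integral_refl(2))
  then show ?case by (simp add: cc_def)
next
  case (Suc N)
  have "(phi s has_integral ((\<Sum>k<N. Hk k s) + Hk N s)) {1..cc (Suc N)}"
    by (rule has_integral_combine[OF cc_ge1 cc_mono Suc piece_integral[OF s0 s1]])
  then show ?case by simp
qed

lemma norm_phi:
  assumes "t \<ge> 0"
  shows "norm (phi s t) \<le> t powr (- Re s - 1)"
proof -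
  have "norm (of_real (frac (t + 1/2)) :: complex) \<le> 1"
    using frac_lt_1[of "t+1/2"] frac_ge_0[of "t+1/2"] by simp
  moreover have "norm (complex_of_real t powr (-s-1)) = t powr (- Re s - 1)"
    using assms by (subst norm_powr_real_powr) auto
  ultimately show ?thesis unfolding phi_def norm_mult
    by (metis mult_left_le_one_le norm_ge_zero powr_ge_zero)
qed

lemma Hk_sums:
  assumes sp: "Re s > 0" and s1: "s \<noteq> 1"
  shows "(\<lambda>k. Hk k s) sums integral {1..} (phi s)"
proof -
  have s0: "s \<noteq> 0" using sp by auto
  define f where "f = (\<lambda>N::nat. \<lambda>t::real. if t \<in> {..cc N} then phi s t else 0)"
  have fi: "(f N has_integral (\<Sum>k<N. Hk k s)) {1..}" for N
  proof -
    have "{..cc N} \<inter> {1..} = {1..cc N}" by auto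
    then show ?thesis unfolding f_def using has_integral_restrict_Int partial_integral[OF s0 s1] by metis
  qed
  have hi: "(\<lambda>t. t powr (- Re s - 1)) integrable_on {1..}"
    using has_integral_powr_to_inf[of "- Re s - 1" 1] sp by auto
  have le: "norm (f N t) \<le> t powr (- Re s - 1)" if "t \<in> {1..}" for N t
    using norm_phi[of t s] that by (auto simp: f_def)
  have conv: "(\<lambda>N. f N t) \<longlonglongrightarrow> phi s t" if "t \<in> {1..}" for t
  proof (rule tendsto_eventually)
    have "eventually (\<lambda>N. N \<ge> nat \<lceil>t\<rceil>) sequentially" by (rule eventually_ge_at_top)
    then show "eventually (\<lambda>N. f N t = phi s t) sequentially"
    proof (rule eventually_mono)
      fix N assume "N \<ge> nat \<lceil>t\<rceil>"
      then have "real N \<ge> t" by linarith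
      then have "t \<le> cc N" using cc_ge[of N] by linarith
      then show "f N t = phi s t" by (simp add: f_def)
    qed
  qed
  have "(\<lambda>N. integral {1..} (f N)) \<longlonglongrightarrow> integral {1..} (phi s)"
    by (rule dominated_convergence(2)[OF _ hi le conv]) (use fi in blast)+
  moreover have "integral {1..} (f N) = (\<Sum>k<N. Hk k s)" for N using fi by blast
  ultimately show ?thesis by (simp add: sums_def)
qed

lemma Hk_bound:
  assumes d: "0 < d" "d \<le> Re s" and s1: "s \<noteq> 1"
  shows "norm (Hk k s) \<le> (real k + 1/2) powr (- d - 1)"
proof -
  have s0: "s \<noteq> 0" using d by auto
  have "norm (Hk k s) \<le> (real k + 1/2) powr (- d - 1) * Henstock_Kurzweil_Integration.content (cbox (cc k) (cc (Suc k)))"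
  proof (rule has_integral_bound)
    show "(phi s has_integral Hk k s) (cbox (cc k) (cc (Suc k)))"
      using piece_integral[OF s0 s1] by simp
    fix t assume t: "t \<in> cbox (cc k) (cc (Suc k))"
    then have t1: "t \<ge> 1" "t \<ge> real k + 1/2" using cc_ge1[of k] cc_ge[of k] by auto
    have "norm (phi s t) \<le> t powr (- Re s - 1)" using norm_phi[of t s] t1 by auto
    also have "\<dots> \<le> t powr (- d - 1)" using t1 d by (intro powr_mono) auto
    also have "\<dots> \<le> (real k + 1/2) powr (- d - 1)" using t1 d by (intro powr_mono2') auto
    finally show "norm (phi s t) \<le> (real k + 1/2) powr (- d - 1)" .
  qed simp
  also have "\<dots> \<le> (real k + 1/2) powr (- d - 1) * 1"
    using cc_le[of k] cc_ge[of k] cc_Suc[of k] by (intro mult_left_mono) auto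
  finally show ?thesis by simp
qed

definition DD :: "complex set" where "DD = {s. 0 < Re s} - {1}"

lemma open_DD: "open DD"
  unfolding DD_def by (intro open_Diff open_halfspace_Re_gt) auto

lemma Hk_holo: "Hk k holomorphic_on DD"
  unfolding Hk_def Fp_def DD_def
  by (intro holomorphic_intros) auto

lemma summable_M:
  assumes "d > 0"
  shows "summable (\<lambda>k. (real k + 1/2) powr (- d - 1))"
proof (rule summable_comparison_test_ev)
  show "summable (\<lambda>k. real k powr (- d - 1))" using assms by (subst summable_real_powr_iff) auto
  show "eventually (\<lambda>k. norm ((real k + 1/2) powr (- d - 1)) \<le> real k powr (- d - 1)) sequentially"
    using eventually_gt_at_top[of "0::nat"]
  proof (rule eventually_mono)
    fix k :: nat assume "k > 0"
    then show "norm ((real k + 1/2) powr (- d - 1)) \<le> real k powr (- d - 1)"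
      using assms by (auto intro!: powr_mono2')
  qed
qed

lemma G_holo: "(\<lambda>s. suminf (\<lambda>k. Hk k s)) holomorphic_on DD"
proof (rule holomorphic_uniform_sequence[OF open_DD])
  show "(\<lambda>s. \<Sum>i<n. Hk i s) holomorphic_on DD" for n
    by (intro holomorphic_on_sum Hk_holo)
  fix x assume x: "x \<in> DD"
  define d where "d = min (Re x / 2) (cmod (x - 1) / 2)"
  have x0: "Re x > 0" and x1: "x \<noteq> 1" using x by (auto simp: DD_def)
  have dpos: "d > 0" using x0 x1 by (auto simp: d_def)
  have sub: "cball x d \<subseteq> DD"
  proof
    fix z assume z: "z \<in> cball x d"
    then have "cmod (x - z) \<le> d" by (simp add: dist_norm)
    moreover have "Re x - Re z \<le> cmod (x - z)" using abs_Re_le_cmod[of "x - z"] by simp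
    ultimately have "Re z \<ge> Re x / 2" by (auto simp: d_def)
    moreover have "z \<noteq> 1"
    proof
      assume "z = 1"
      with \<open>cmod (x - z) \<le> d\<close> have "cmod (x - 1) \<le> cmod (x - 1) / 2" by (auto simp: d_def)
      with x1 show False by simp
    qed
    ultimately show "z \<in> DD" using x0 by (auto simp: DD_def)
  qed
  have bnd: "norm (Hk k z) \<le> (real k + 1/2) powr (- (Re x / 2) - 1)" if "z \<in> cball x d" for k z
  proof -
    have "z \<in> DD" using sub that by blast
    moreover have "Re x - Re z \<le> cmod (x - z)" using abs_Re_le_cmod[of "x - z"] by simp
    moreover have "cmod (x - z) \<le> d" using that by (simp add: dist_norm)
    ultimately show ?thesis using x0 by (intro Hk_bound) (auto simp: DD_def d_def)
  qed
  have "uniform_limit (cball x d) (\<lambda>n s. \<Sum>i<n. Hk i s) (\<lambda>s. suminf (\<lambda>k. Hk k s)) sequentially"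
    by (rule Weierstrass_m_test[OF bnd summable_M]) (use x0 in auto)
  then show "\<exists>d>0. cball x d \<subseteq> DD \<and> uniform_limit (cball x d) (\<lambda>n s. \<Sum>i<n. Hk i s) (\<lambda>s. suminf (\<lambda>k. Hk k s)) sequentially"
    using dpos sub by blast
qed


lemma alg_base: fixes s p :: complex assumes "s \<noteq> 0" "s \<noteq> 1"
 shows "s*(3/2*p/(1-s) + (1/2/s)*p - (1/(1-s) + 1/2/s)) = 1/(s-1) + 1/2 - p + 3/2*p/(1-s)"
proof -
  define w where "w = inverse (1 - s)"
  define v where "v = inverse s"
  have w: "w * (1 - s) = 1" using assms by (simp add: w_def)
  have v: "v * s = 1" using assms by (simp add: v_def)
  have w2: "inverse (s - 1) = - w" unfolding w_def by (metis inverse_minus_eq minus_diff_eq)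
  show ?thesis unfolding divide_inverse w_def[symmetric] v_def[symmetric] w2
    using w v by algebra
qed

lemma alg_step: fixes s m pa pb :: complex assumes "s \<noteq> 0" "s \<noteq> 1"
 shows "s*((m+1)*pb/(1-s) + (m/s)*pb - (m*pa/(1-s) + (m/s)*pa)) + m*pa/(1-s) = -pb + (m+1)*pb/(1-s)"
proof -
  define w where "w = inverse (1 - s)"
  define v where "v = inverse s"
  have w: "w * (1 - s) = 1" using assms by (simp add: w_def)
  have v: "v * s = 1" using assms by (simp add: v_def)
  show ?thesis unfolding divide_inverse w_def[symmetric] v_def[symmetric]
    using w v by algebra
qed

lemma telescope:
  assumes s0: "s \<noteq> 0" and s1: "s \<noteq> 1"
  shows "s * (\<Sum>k<Suc M. Hk k s) = 1/(s-1) + 1/2 - (\<Sum>k<Suc M. complex_of_real (real k + 3/2) powr (-s))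
           + of_real (real M + 3/2) * of_real (real M + 3/2) powr (-s) / (1 - s)"
proof (induction M)
  case 0
  define p where "p = complex_of_real (3/2) powr (-s)"
  have h: "Hk 0 s = 3/2 * p / (1 - s) + (1/2 / s) * p - (1 / (1 - s) + (1/2 / s))"
    unfolding Hk_def Fp_def cc_def p_def by simp
  have "s * Hk 0 s = 1/(s-1) + 1/2 - p + 3/2 * p / (1 - s)"
    unfolding h by (rule alg_base[OF s0 s1])
  then show ?case by (simp add: p_def)
next
  case (Suc M)
  define pa where "pa = complex_of_real (real M + 3/2) powr (-s)"
  define pb where "pb = complex_of_real (real M + 3/2 + 1) powr (-s)"
  define m where "m = complex_of_real (real M + 3/2)"
  have cs: "cc (Suc M) = real M + 3/2" "cc (Suc (Suc M)) = real M + 3/2 + 1" by (simp_all add: cc_def)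
  have h: "Hk (Suc M) s = (m+1) * pb / (1 - s) + (m / s) * pb - (m * pa / (1 - s) + (m / s) * pa)"
    unfolding Hk_def Fp_def cs pa_def pb_def m_def by (simp add: add_ac)
  have e: "complex_of_real (real (Suc M) + 3/2) = m + 1" "real (Suc M) + 3/2 = real M + 3/2 + 1"
    by (simp_all add: m_def)
  have "s * (\<Sum>k<Suc (Suc M). Hk k s) = s * (\<Sum>k<Suc M. Hk k s) + s * Hk (Suc M) s"
    by (simp add: algebra_simps)
  also have "\<dots> = 1/(s-1) + 1/2 - (\<Sum>k<Suc M. complex_of_real (real k + 3/2) powr (-s))
           + (s * Hk (Suc M) s + m * pa / (1 - s))"
    using Suc by (simp add: pa_def m_def)
  also have "s * Hk (Suc M) s + m * pa / (1 - s) = -pb + (m+1)*pb/(1-s)"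
    unfolding h by (rule alg_step[OF s0 s1])
  finally show ?case unfolding e pb_def by (simp add: m_def add_ac)
qed

lemma dir_summable:
  assumes "Re s > 1"
  shows "summable (\<lambda>n. inverse (of_nat (Suc n) powr s) :: complex)"
proof (rule summable_norm_cancel)
  have "norm (inverse (of_nat (Suc n) powr s) :: complex) = real (Suc n) powr (- Re s)" for n
  proof -
    have "norm (of_nat (Suc n) powr s :: complex) = real (Suc n) powr Re s"
      by (subst norm_powr_real_powr) auto
    then show ?thesis by (simp add: norm_inverse powr_minus)
  qed
  moreover have "summable (\<lambda>n. real (Suc n) powr (- Re s))"
    using assms summable_Suc_iff[of "\<lambda>n. real n powr (- Re s)"] by (simp add: summable_real_powr_iff)
  ultimately show "summable (\<lambda>n. norm (inverse (of_nat (Suc n) powr s) :: complex))" by simp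
qed

lemma half_powr: "complex_of_real (x / 2) powr (-s) = 2 powr s * complex_of_real x powr (-s)"
  if "x \<ge> 0" for x
proof -
  have e: "complex_of_real (x / 2) = of_real x * (1/2)" by simp
  have "(of_real x * (1/2::complex)) powr (-s) = of_real x powr (-s) * (1/2) powr (-s)"
    using that by (intro powr_times_real) auto
  then have "complex_of_real (x / 2) powr (-s) = of_real x powr (-s) * (1/2) powr (-s)"
    unfolding e .
  moreover have "(1/2 :: complex) powr (-s) = 2 powr s"
  proof -
    have "(2::complex) powr s * (1/2) powr s = (2 * (1/2)) powr s"
      by (subst powr_times_real) auto
    then have "(2::complex) powr s * (1/2) powr s = 1" by simp
    then show ?thesis by (simp add: powr_minus inverse_eq_divide field_simps)
  qed
  ultimately show ?thesis by simp
qed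

lemma odd_sums:
  assumes "Re s > 1"
  defines "z \<equiv> (\<Sum>n. inverse (of_nat (Suc n) powr s) :: complex)"
  shows "(\<lambda>k. complex_of_real (real k + 3/2) powr (-s)) sums ((2 powr s - 1) * z - 2 powr s)"
proof -
  define A where "A n = complex_of_real ((real n + 1) / 2) powr (-s)" for n
  have zs: "(\<lambda>n. inverse (of_nat (Suc n) powr s) :: complex) sums z"
    unfolding z_def using dir_summable[OF assms(1)] by (rule summable_sums)
  have inv: "inverse (of_nat (Suc n) powr s) = complex_of_real (real n + 1) powr (-s)" for n
    by (simp add: powr_minus add_ac)
  have A: "A n = 2 powr s * inverse (of_nat (Suc n) powr s)" for n
    unfolding A_def inv by (subst half_powr) auto
  have "A sums (2 powr s * z)" unfolding A by (rule sums_mult[OF zs])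
  from sums_group[OF this, of 2]
  have g: "(\<lambda>m. A (2*m) + A (2*m+1)) sums (2 powr s * z)"
    by (simp add: mult.commute numeral_2_eq_2)
  have odd: "A (2*m+1) = inverse (of_nat (Suc m) powr s)" for m
  proof -
    have eq: "(real (2*m+1) + 1) / 2 = real m + 1" by simp
    show ?thesis unfolding A_def inv eq ..
  qed
  have "(\<lambda>m. A (2*m+1)) sums z" unfolding odd by (rule zs)
  from sums_diff[OF g this] have "(\<lambda>m. A (2*m)) sums (2 powr s * z - z)" by simp
  then have "(\<lambda>m. A (2 * Suc m)) sums (2 powr s * z - z - A 0)"
    using sums_Suc_iff[of "\<lambda>m. A (2*m)"] by simp
  moreover have "A 0 = 2 powr s" unfolding A_def using half_powr[of 1 s] by simp
  moreover have "A (2 * Suc m) = complex_of_real (real m + 3/2) powr (-s)" for m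
  proof -
    have eq: "(real (2 * Suc m) + 1) / 2 = real m + 3/2" by simp
    show ?thesis unfolding A_def eq ..
  qed
  ultimately show ?thesis by (simp add: algebra_simps)
qed

lemma limit_eq:
  assumes s: "Re s > 1"
  defines "z \<equiv> (\<Sum>n. inverse (of_nat (Suc n) powr s) :: complex)"
  shows "s * suminf (\<lambda>k. Hk k s) = 1/(s-1) + 1/2 - ((2 powr s - 1) * z - 2 powr s)"
proof -
  have s0: "s \<noteq> 0" and s1: "s \<noteq> 1" using s by auto
  have "(\<lambda>k. Hk k s) sums integral {1..} (phi s)" using s by (intro Hk_sums) auto
  then have hs: "(\<lambda>k. Hk k s) sums suminf (\<lambda>k. Hk k s)" by (simp add: sums_iff)
  have T: "(\<lambda>k. complex_of_real (real k + 3/2) powr (-s)) sums ((2 powr s - 1) * z - 2 powr s)"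
    unfolding z_def by (rule odd_sums[OF s])
  have l1: "(\<lambda>M. s * (\<Sum>k<Suc M. Hk k s)) \<longlonglongrightarrow> s * suminf (\<lambda>k. Hk k s)"
    using hs unfolding sums_def by (intro tendsto_mult tendsto_const LIMSEQ_Suc)
  have fl: "filterlim (\<lambda>M::nat. 3/2 + real M) at_top sequentially"
    by (intro filterlim_tendsto_add_at_top[OF tendsto_const filterlim_real_sequentially])
  have l0: "(\<lambda>M. complex_of_real (3/2 + real M) powr (1 - s)) \<longlonglongrightarrow> 0"
    using s by (intro tendsto_neg_powr_complex_of_real[OF fl]) auto
  have eqp: "of_real (real M + 3/2) * of_real (real M + 3/2) powr (-s) = complex_of_real (3/2 + real M) powr (1 - s)" for M
  proof -
    have "complex_of_real (3/2 + real M) powr (1 + (-s)) = of_real (3/2 + real M) powr 1 * of_real (3/2 + real M) powr (-s)"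
      by (rule powr_add)
    then show ?thesis by (simp add: add_ac)
  qed
  have l2: "(\<lambda>M. 1/(s-1) + 1/2 - (\<Sum>k<Suc M. complex_of_real (real k + 3/2) powr (-s))
           + of_real (real M + 3/2) * of_real (real M + 3/2) powr (-s) / (1 - s))
      \<longlonglongrightarrow> 1/(s-1) + 1/2 - ((2 powr s - 1) * z - 2 powr s) + 0 / (1 - s)"
    unfolding eqp
  proof (intro tendsto_intros l0)
    show "(\<lambda>M. \<Sum>k<Suc M. complex_of_real (real k + 3/2) powr (-s)) \<longlonglongrightarrow> (2 powr s - 1) * z - 2 powr s"
      using T unfolding sums_def by (rule LIMSEQ_Suc)
  qed (use s1 in auto)
  have l2': "(\<lambda>M. s * (\<Sum>k<Suc M. Hk k s)) \<longlonglongrightarrow> 1/(s-1) + 1/2 - ((2 powr s - 1) * z - 2 powr s)"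
    using l2 unfolding telescope[OF s0 s1, symmetric] by simp
  show ?thesis using LIMSEQ_unique[OF l1 l2'] .
qed

lemma two_powr_ne: "Re s > 0 \<Longrightarrow> (2::complex) powr s \<noteq> 1"
proof
  assume "Re s > 0" "(2::complex) powr s = 1"
  then have "norm ((2::complex) powr s) = 1" by simp
  moreover have "norm ((2::complex) powr s) = 2 powr Re s" by (subst norm_powr_real_powr) auto
  moreover have "(2::real) powr Re s > 1" using \<open>Re s > 0\<close> by simp
  ultimately show False by simp
qed

definition Fz :: "complex \<Rightarrow> complex" where
  "Fz s = (2 powr s + 1/(s-1) + 1/2 - s * suminf (\<lambda>k. Hk k s)) / (2 powr s - 1)"

lemma Fz_holo: "Fz holomorphic_on DD"
  unfolding Fz_def
  by (intro holomorphic_intros G_holo) (auto simp: DD_def dest: two_powr_ne)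

lemma Fz_dir: "Re s > 1 \<Longrightarrow> Fz s = (\<Sum>n. inverse (of_nat (Suc n) powr s))"
  using limit_eq[of s] two_powr_ne[of s] unfolding Fz_def by (auto simp: field_simps)

lemma connected_DD: "connected DD"
  unfolding DD_def
  by (intro connected_open_delete open_halfspace_Re_gt convex_connected convex_halfspace_Re_gt) auto

lemma zeta_eq: assumes "s \<in> DD" shows "zeta s = Fz s"
proof -
  define P where "P = (\<lambda>f::complex \<Rightarrow> complex. f holomorphic_on zeta_domain
              \<and> (\<forall>s. 1 < Re s \<longrightarrow> f s = (\<Sum>n. inverse (of_nat (Suc n) powr s)))
              \<and> (\<forall>s. s \<notin> zeta_domain \<longrightarrow> f s = 0))"
  define Z where "Z s = (if s \<in> DD then Fz s else 0)" for s
  have dom: "zeta_domain = DD" by (simp add: zeta_domain_def DD_def)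
  have Zh: "Z holomorphic_on DD" by (rule holomorphic_transform[OF Fz_holo]) (simp add: Z_def)
  have Zd: "Z s = (\<Sum>n. inverse (of_nat (Suc n) powr s))" if "1 < Re s" for s
  proof -
    have "s \<in> DD" using that by (auto simp: DD_def)
    then show ?thesis using Fz_dir[OF that] by (simp add: Z_def)
  qed
  have Zo: "Z s = 0" if "s \<notin> DD" for s using that by (simp add: Z_def)
  have PZ: "P Z" unfolding P_def dom using Zh Zd Zo by blast
  have uniq: "f = Z" if Pf: "P f" for f
  proof
    have fh: "f holomorphic_on DD" and fd: "\<And>s. 1 < Re s \<Longrightarrow> f s = (\<Sum>n. inverse (of_nat (Suc n) powr s))"
      and fo: "\<And>s. s \<notin> DD \<Longrightarrow> f s = 0"
      using Pf unfolding P_def dom by blast+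
    fix w
    show "f w = Z w"
    proof (cases "w \<in> DD")
      case False then show ?thesis using fo Zo by simp
    next
      case True
      have "f w - Z w = 0"
      proof (rule analytic_continuation[where f = "\<lambda>v. f v - Z v" and S = DD and U = "{s. Re s > 1}" and \<xi> = 2])
        show "(\<lambda>v. f v - Z v) holomorphic_on DD" using fh Zh by (rule holomorphic_on_diff)
        show "open DD" by (rule open_DD)
        show "connected DD" by (rule connected_DD)
        show "{s. Re s > 1} \<subseteq> DD" by (auto simp: DD_def)
        show "2 \<in> DD" by (simp add: DD_def)
        have "2 \<in> interior {s. Re s > (1::real)}"
          by (subst interior_open) (auto intro: open_halfspace_Re_gt)
        then show "2 islimpt {s. Re s > 1}" by (rule interior_limit_point)
        show "\<And>z. z \<in> {s. 1 < Re s} \<Longrightarrow> f z - Z z = 0" using fd Zd by simp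
        show "w \<in> DD" by (rule True)
      qed
      then show ?thesis by simp
    qed
  qed
  have "(THE f. P f) = Z" using PZ uniq by (rule the_equality[where P = P])
  moreover have "zeta = (THE f. P f)" unfolding zeta_def P_def ..
  ultimately have zZ: "zeta = Z" by simp
  have "Z s = Fz s" using assms by (simp add: Z_def)
  then show ?thesis using zZ by simp
qed

theorem mainTheorem2:
  fixes \<rho> :: complex
  assumes "0 < Re \<rho>" and "Re \<rho> < 1" and "zeta \<rho> = 0"
  shows "2 powr \<rho> + 1 / (\<rho> - 1) + 1 / 2
           = \<rho> * integral {1..} (\<lambda>t::real. of_real (frac (t + 1/2)) * (of_real t) powr (- \<rho> - 1))"
proof -
  have D: "\<rho> \<in> DD" using assms by (auto simp: DD_def)
  have "(\<lambda>k. Hk k \<rho>) sums integral {1..} (phi \<rho>)" using D by (intro Hk_sums) (auto simp: DD_def)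
  then have G: "suminf (\<lambda>k. Hk k \<rho>) = integral {1..} (phi \<rho>)" by (simp add: sums_iff)
  have "Fz \<rho> = 0" using zeta_eq[OF D] assms(3) by simp
  moreover have "2 powr \<rho> - 1 \<noteq> 0" using two_powr_ne[of \<rho>] assms by auto
  ultimately have "2 powr \<rho> + 1/(\<rho>-1) + 1/2 - \<rho> * suminf (\<lambda>k. Hk k \<rho>) = 0"
    unfolding Fz_def by simp
  then show ?thesis unfolding G phi_def by simp
qed

end
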